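(* In the stochastic extra-momentum scheme (defined in the context), choose $\theta=\frac18$, $\alpha=\frac1{4L}$, $\tau=\frac{\alpha}{1+\theta/\kappa}$, $\gamma=\frac{1}{8(\kappa+\theta)}$. Then for every $k\ge0$, $$\mathbb E\big[\|z^k-z^*\|^2\big]\le2\Big(1-\frac1{8\kappa+1}\Big)^k\|z^0-z^*\|^2+\frac{128\sigma^2}{\mu(8L+\mu)}+\frac{4\delta^2}{\mu^2}.$$
   Context: Let $\mathcal Z\subseteq\mathbb R^n$ be a nonempty closed convex set. Let $F:\mathcal Z\to\mathbb R^n$ satisfy $(F(z)-F(z'))^\top(z-z')\ge\mu\|z-z'\|^2$ and $\|F(z)-F(z')\|\le L\|z-z'\|$ for all $z,z'\in\mathcal Z$, where $0<\mu\le L$; $\kappa=L/\mu$. Let $z^*$ be the unique point of $\mathcal Z$ with $F(z^* )^\top(z-z^* )\ge 0$ for all $z\in\mathcal Z$. $P_{\mathcal Z}$ denotes Euclidean projection onto $\mathcal Z$. A stochastic oracle returns $\hat F(z,\xi)$ for a random sample $\xi$, and satisfies, for every $z\in\mathcal Z$, $\mathbb E_\xi\|\hat F(z,\xi)-F(z)\|\le\delta$ and $\mathbb E_\xi\|\hat F(z,\xi)-F(z)\|^2\le\sigma^2$ for constants $\delta,\sigma\ge0$. Each oracle call $\hat F(z^j)$ means $\hat F(z^j,\xi^j)$ with a fresh sample independent of all previous samples. The stochastic extra-momentum scheme: starting from $z^0\in\mathcal Z$ with $z^{-1}:=z^0$ and $\hat F(z^{-1}):=\hat F(z^0)$, for $k\ge0$,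 $z^{k+1}=P_{\mathcal Z}(z^k-\alpha\hat F(z^k)+\gamma(z^k-z^{k-1})-\tau(\hat F(z^k)-\hat F(z^{k-1})))$. *)

theory Defs
  imports "HOL-Probability.Probability"
begin

text \<open>Stochastic extra-momentum iterates, for a fixed realisation of the sample
  sequence xi (xi j is the sample used by the oracle call at z^j).
  Conventions: z^{-1} = z^0 and Fhat(z^{-1}) = Fhat(z^0, xi 0).\<close>

fun sem_iter :: "('a::euclidean_space \<Rightarrow> 's \<Rightarrow> 'a) \<Rightarrow> 'a set \<Rightarrow> real \<Rightarrow> real \<Rightarrow> real
    \<Rightarrow> 'a \<Rightarrow> (nat \<Rightarrow> 's) \<Rightarrow> nat \<Rightarrow> 'a" where
  "sem_iter Fh Z \<alpha> \<gamma> \<tau> z0 xi 0 = z0"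
| "sem_iter Fh Z \<alpha> \<gamma> \<tau> z0 xi (Suc k) =
    (let zk = sem_iter Fh Z \<alpha> \<gamma> \<tau> z0 xi k;
         zp = (if k = 0 then z0 else sem_iter Fh Z \<alpha> \<gamma> \<tau> z0 xi (k - 1));
         gk = Fh zk (xi k);
         gp = (if k = 0 then gk else Fh zp (xi (k - 1)))
     in closest_point Z (zk - \<alpha> *\<^sub>R gk + \<gamma> *\<^sub>R (zk - zp) - \<tau> *\<^sub>R (gk - gp)))"

end

theory Submission
  imports Defs
begin

lemma comb:
  fixes g a mu A0 B K R t c W Wn D Dn Ep E i3 i4 i6 j1 j2 k1 k2 nb :: real
  assumes P: "(Wn - W + Dn)/2 - g*(j1 + j2) + a*i3 - i4 + (1-g)*(k1 + k2) + c*i6 \<le> 0"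
  and h1: "g*j1 \<le> g*(D+W)/2"
  and h2: "g*j2 \<le> g*(D+Dn)/2"
  and h3: "a*i3 \<ge> a*mu*Wn"
  and h4: "(1-g)*(-k2) \<le> (1-g)/8*(D+Dn) + Dn/16 + 4*(1-g)^2*a^2*Ep^2"
  and h5: "-c*i6 \<le> c*E*nb + c*(a+t)*E^2"
  and h6: "Dn*(1/2 - g/2 - (1-g)/8 - 1/16) \<ge> B*Dn"
  and h7: "(g + (1-g)/8)*D \<le> (1-g)*B*D"
  and h8: "(1/2+g/2)*W = (1-g)*A0*W"
  and h9: "(1/2 + a*mu)*Wn = (A0+R)*Wn"
  and h10: "4*(1-g)^2*a^2*Ep^2 \<le> (1-g)*K*Ep^2"
  shows "A0*Wn - i4 + B*Dn + K*E^2 + R*Wn \<le> (1-g)*(A0*W - k1 + B*D + K*Ep^2) + c*E*nb + (c*(a+t)+K)*E^2"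
proof -
  have s: "0 \<le> (0 - ((Wn - W + Dn)/2 - g*(j1 + j2) + a*i3 - i4 + (1-g)*(k1 + k2) + c*i6))
     + (g*(D+W)/2 - g*j1) + (g*(D+Dn)/2 - g*j2) + (a*i3 - a*mu*Wn)
     + ((1-g)/8*(D+Dn) + Dn/16 + 4*(1-g)^2*a^2*Ep^2 - (1-g)*(-k2))
     + (c*E*nb + c*(a+t)*E^2 - (-c*i6)) + (Dn*(1/2 - g/2 - (1-g)/8 - 1/16) - B*Dn)
     + ((1-g)*B*D - (g + (1-g)/8)*D) + ((1-g)*A0*W - (1/2+g/2)*W) + ((1/2 + a*mu)*Wn - (A0+R)*Wn)
     + ((1-g)*K*Ep^2 - 4*(1-g)^2*a^2*Ep^2)"
    using assms by linarith
  have e: "((1-g)*(A0*W - k1 + B*D + K*Ep^2) + c*E*nb + (c*(a+t)+K)*E^2) - (A0*Wn - i4 + B*Dn + K*E^2 + R*Wn)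
     = (0 - ((Wn - W + Dn)/2 - g*(j1 + j2) + a*i3 - i4 + (1-g)*(k1 + k2) + c*i6))
     + (g*(D+W)/2 - g*j1) + (g*(D+Dn)/2 - g*j2) + (a*i3 - a*mu*Wn)
     + ((1-g)/8*(D+Dn) + Dn/16 + 4*(1-g)^2*a^2*Ep^2 - (1-g)*(-k2))
     + (c*E*nb + c*(a+t)*E^2 - (-c*i6)) + (Dn*(1/2 - g/2 - (1-g)/8 - 1/16) - B*Dn)
     + ((1-g)*B*D - (g + (1-g)/8)*D) + ((1-g)*A0*W - (1/2+g/2)*W) + ((1/2 + a*mu)*Wn - (A0+R)*Wn)
     + ((1-g)*K*Ep^2 - 4*(1-g)^2*a^2*Ep^2)"
    by (simp add: field_simps)
  show ?thesis using s e by linarith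
qed



lemma inner_le_half: "inner x y \<le> ((norm x)\<^sup>2 + (norm y)\<^sup>2)/2"
  for x y :: "'a::real_inner"
proof -
  have "0 \<le> (norm (x - y))\<^sup>2" by simp
  also have "(norm (x - y))\<^sup>2 = (norm x)\<^sup>2 + (norm y)\<^sup>2 - 2 * inner x y"
    by (simp add: power2_norm_eq_inner inner_diff_left inner_diff_right inner_commute)
  finally show ?thesis by simp
qed

lemma neg_inner_le: "- inner x y \<le> norm x * norm y"
  for x y :: "'a::real_inner"
  using norm_cauchy_schwarz[of "-x" y] by simp

lemma sq_le_5: "(x + y)\<^sup>2 \<le> 5/4 * x\<^sup>2 + 5 * y\<^sup>2" for x y :: real
proof -
  have "0 \<le> (x/2 - 2*y)\<^sup>2" by simp
  then show ?thesis by (simp add: power2_eq_square algebra_simps)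
qed

locale sem =
  fixes Z :: "'a::euclidean_space set" and F :: "'a \<Rightarrow> 'a" and \<mu> L :: real and zs :: 'a
    and Fh :: "'a \<Rightarrow> 's \<Rightarrow> 'a" and z0 :: 'a
  assumes Zne: "Z \<noteq> {}" and Zcl: "closed Z" and Zcv: "convex Z"
    and mu0: "0 < \<mu>" and muL: "\<mu> \<le> L"
    and sm: "\<forall>z\<in>Z. \<forall>z'\<in>Z. inner (F z - F z') (z - z') \<ge> \<mu> * (norm (z - z'))\<^sup>2"
    and lip: "\<forall>z\<in>Z. \<forall>z'\<in>Z. norm (F z - F z') \<le> L * norm (z - z')"
    and zsZ: "zs \<in> Z" and zsVI: "\<forall>z\<in>Z. inner (F zs) (z - zs) \<ge> 0"
    and z0Z: "z0 \<in> Z"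
begin

definition "aa = 1/(4*L)"
definition "gg = \<mu>/(8*L+\<mu>)"
definition "tt = 2/(8*L+\<mu>)"
definition "A0 = 1/2 + \<mu>/(8*L)"
definition "KK = 4*aa^2"
definition "RR = \<mu>/(8*L)"
definition "rr = 4*RR/5"
definition "CC = tt*(aa+tt) + KK + 4*RR*(aa+tt)^2"

definition "Psi z zp X ep = A0*(norm (z - zs))\<^sup>2 - inner X (z - zs) + 1/4*(norm (z - zp))\<^sup>2 + KK*(norm ep)\<^sup>2"

lemma L0: "0 < L" using mu0 muL by linarith

lemma par: "0 < aa" "0 \<le> gg" "gg \<le> 1/9" "aa*L = 1/4" "(1/2+gg/2) = (1-gg)*A0"
   "1/2 + aa*\<mu> = A0 + RR" "0 < tt" "tt = aa*(1-gg)" "0 \<le> RR" "0 < gg"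
proof -
  have L: "0 < L" using L0 .
  have m: "0 < 8*L+\<mu>" using mu0 L by linarith
  show "0 < aa" "0 \<le> gg" "aa*L = 1/4" "0 < tt" "0 \<le> RR" "0 < gg"
    using mu0 L m unfolding aa_def gg_def tt_def RR_def by auto
  show "gg \<le> 1/9" unfolding gg_def using mu0 muL m by (simp add: field_simps)
  show "1/2 + aa*\<mu> = A0 + RR" unfolding aa_def A0_def RR_def using L by (simp add: field_simps)
  have e1: "1/2+gg/2 = (4*L+\<mu>)/(8*L+\<mu>)" unfolding gg_def using m by (simp add: field_simps)
  have e2: "1-gg = 8*L/(8*L+\<mu>)" unfolding gg_def using m by (simp add: field_simps)
  have e4: "A0 = (4*L+\<mu>)/(8*L)" unfolding A0_def using L by (simp add: field_simps)
  have e3: "(8*L/(8*L+\<mu>))*A0 = (4*L+\<mu>)/(8*L+\<mu>)" unfolding e4 using m L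
    by (simp add: divide_simps)
  show "(1/2+gg/2) = (1-gg)*A0" by (simp only: e1 e2 e3)
  show "tt = aa*(1-gg)" unfolding tt_def aa_def gg_def using L m
    by (simp add: field_simps)
qed

lemma step:
  fixes z zp zn zbar X Xn e ep q y :: 'a and c :: real
  assumes zZ: "z \<in> Z" and zpZ: "zp \<in> Z"
    and zn: "zn = closest_point Z y" and y: "y = z + gg *\<^sub>R (z - zp) - q"
    and q: "q = aa *\<^sub>R F zn - Xn + (1-gg) *\<^sub>R X + c *\<^sub>R e"
    and Xn: "Xn = aa *\<^sub>R (F zn - F z - e)"
    and Xb: "norm X \<le> aa*L*norm (z - zp) + aa*norm ep"
    and c: "c = 0 \<or> c = tt"
    and cb: "c = tt \<Longrightarrow> norm (zn - zbar) \<le> (aa+tt) * norm e"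
  shows "Psi zn z Xn e + (if c = tt then rr*(norm (zbar - zs))\<^sup>2 else 0)
     \<le> (1-gg)*Psi z zp X ep + c*norm e*norm (zbar - zs) + CC*(norm e)\<^sup>2"
proof -
  note par = par
  have znZ: "zn \<in> Z" using zn closest_point_in_set[OF Zcl Zne] by simp
  have c0: "0 \<le> c" using c par by auto
  define W where "W = (norm (z - zs))\<^sup>2"
  define Wn where "Wn = (norm (zn - zs))\<^sup>2"
  define D where "D = (norm (z - zp))\<^sup>2"
  define Dn where "Dn = (norm (zn - z))\<^sup>2"
  define j1 where "j1 = inner (z - zp) (z - zs)"
  define j2 where "j2 = inner (z - zp) (zn - z)"
  define i3 where "i3 = inner (F zn) (zn - zs)"
  define i4 where "i4 = inner Xn (zn - zs)"
  define k1 where "k1 = inner X (z - zs)"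
  define k2 where "k2 = inner X (zn - z)"
  define i6 where "i6 = inner e (zn - zs)"
  define E where "E = norm e"
  define Ep where "Ep = norm ep"
  define nb where "nb = norm (zbar - zs)"
  have pd: "inner (y - zn) (zs - zn) \<le> 0"
    using closest_point_dot[OF Zcv Zcl zsZ, of y] zn by simp
  have idW: "inner (zn - z) (zn - zs) = (Wn - W + Dn)/2"
    unfolding Wn_def W_def Dn_def power2_norm_eq_inner
    by (simp add: inner_diff_left inner_diff_right inner_commute field_simps)
  have id2: "inner (z - zp) (zn - zs) = j1 + j2"
    unfolding j1_def j2_def by (simp add: inner_diff_left inner_diff_right inner_commute)
  have id3: "inner X (zn - zs) = k1 + k2"
    unfolding k1_def k2_def by (simp add: inner_diff_left inner_diff_right inner_commute)
  have P: "(Wn - W + Dn)/2 - gg*(j1 + j2) + aa*i3 - i4 + (1-gg)*(k1 + k2) + c*i6 \<le> 0"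
  proof -
    have "inner (y - zn) (zs - zn) = inner (zn - z) (zn - zs) - gg * inner (z - zp) (zn - zs)
        + inner q (zn - zs)"
      unfolding y by (simp add: inner_diff_left inner_add_left inner_diff_right inner_add_right inner_commute algebra_simps)
    also have "inner q (zn - zs) = aa*i3 - i4 + (1-gg)*inner X (zn - zs) + c*i6"
      unfolding q i3_def i4_def i6_def by (simp add: inner_diff_left inner_add_left)
    finally show ?thesis using pd idW id2 id3 by simp
  qed
  have g0: "0 \<le> gg" and g9: "gg \<le> 1/9" and aL: "aa*L = 1/4" using par by auto
  have h1: "gg*j1 \<le> gg*(D+W)/2"
    using mult_left_mono[OF inner_le_half[of "z-zp" "z-zs"] g0] unfolding j1_def D_def W_def by simp
  have h2: "gg*j2 \<le> gg*(D+Dn)/2"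
    using mult_left_mono[OF inner_le_half[of "z-zp" "zn-z"] g0] unfolding j2_def D_def Dn_def by simp
  have "i3 \<ge> \<mu>*Wn"
  proof -
    have "inner (F zn - F zs) (zn - zs) \<ge> \<mu> * (norm (zn - zs))\<^sup>2" using sm znZ zsZ by blast
    moreover have "inner (F zs) (zn - zs) \<ge> 0" using zsVI znZ by blast
    ultimately show ?thesis unfolding i3_def Wn_def by (simp add: inner_diff_left)
  qed
  then have h3: "aa*i3 \<ge> aa*\<mu>*Wn" using par(1) by (simp add: mult_left_mono)
  have h4: "(1-gg)*(-k2) \<le> (1-gg)/8*(D+Dn) + Dn/16 + 4*(1-gg)^2*aa^2*Ep^2"
  proof -
    define nd where "nd = norm (z - zp)"
    define N where "N = norm (zn - z)"
    have "-k2 \<le> norm X * N" unfolding k2_def N_def by (rule neg_inner_le)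
    also have "\<dots> \<le> (nd/4 + aa*Ep) * N" using Xb aL unfolding nd_def Ep_def N_def
      by (intro mult_right_mono) auto
    finally have k: "-k2 \<le> (nd/4 + aa*Ep) * N" .
    have g1: "0 \<le> 1-gg" using g9 by simp
    have "(1-gg)*(-k2) \<le> (1-gg)*((nd/4 + aa*Ep) * N)" using mult_left_mono[OF k g1] .
    moreover have t1: "(1-gg)*(nd/4*N) \<le> (1-gg)/8*(nd^2+N^2)"
    proof -
      have "0 \<le> (1-gg)*(nd-N)^2" using g1 by simp
      moreover have "(1-gg)/8*(nd^2+N^2) - (1-gg)*(nd/4*N) = (1-gg)*(nd-N)^2/8"
        by (simp add: power2_eq_square field_simps)
      ultimately show ?thesis by linarith
    qed
    moreover have t2: "(1-gg)*(aa*Ep*N) \<le> N^2/16 + 4*(1-gg)^2*aa^2*Ep^2"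
    proof -
      have "0 \<le> (N/4 - 2*(1-gg)*aa*Ep)^2" by simp
      moreover have "N^2/16 + 4*(1-gg)^2*aa^2*Ep^2 - (1-gg)*(aa*Ep*N) = (N/4 - 2*(1-gg)*aa*Ep)^2"
        by (simp add: power2_eq_square algebra_simps)
      ultimately show ?thesis by linarith
    qed
    moreover have "(1-gg)*((nd/4 + aa*Ep) * N) = (1-gg)*(nd/4*N) + (1-gg)*(aa*Ep*N)"
      by (simp add: algebra_simps)
    moreover have eD: "D = nd^2" and eDn: "Dn = N^2" unfolding D_def Dn_def nd_def N_def by auto
    ultimately show ?thesis unfolding eD eDn by linarith
  qed
  have h5: "-c*i6 \<le> c*E*nb + c*(aa+tt)*E^2"
  proof (cases "c = tt")
    case True
    have "-i6 = - inner e (zbar - zs) - inner e (zn - zbar)" unfolding i6_def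
      by (simp add: inner_diff_right)
    also have "\<dots> \<le> E*nb + E*norm (zn - zbar)" using neg_inner_le[of e "zbar - zs"]
      neg_inner_le[of e "zn - zbar"] unfolding E_def nb_def by linarith
    also have "\<dots> \<le> E*nb + E*((aa+tt)*E)" using cb[OF True] unfolding E_def
      by (intro add_left_mono mult_left_mono) auto
    finally have "-i6 \<le> E*nb + (aa+tt)*E^2" by (simp add: power2_eq_square mult.commute mult.left_commute)
    from mult_left_mono[OF this c0] show ?thesis by (simp add: algebra_simps)
  next
    case False then have "c = 0" using c by auto
    then show ?thesis by simp
  qed
  have Dn0: "0 \<le> Dn" and D0: "0 \<le> D" and W0: "0 \<le> Wn" unfolding Dn_def D_def Wn_def by auto
  have h6: "Dn*(1/2 - gg/2 - (1-gg)/8 - 1/16) \<ge> 1/4*Dn"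
  proof -
    have "Dn*(1/16 - 3*gg/8) \<ge> 0" using Dn0 g9 by simp
    moreover have "Dn*(1/2 - gg/2 - (1-gg)/8 - 1/16) - 1/4*Dn = Dn*(1/16 - 3*gg/8)" by (simp add: field_simps)
    ultimately show ?thesis by linarith
  qed
  have h7: "(gg + (1-gg)/8)*D \<le> (1-gg)*(1/4)*D"
  proof -
    have "D*((1 - 9*gg)/8) \<ge> 0" using D0 g9 by simp
    moreover have "(1-gg)*(1/4)*D - (gg + (1-gg)/8)*D = D*((1 - 9*gg)/8)" by (simp add: field_simps)
    ultimately show ?thesis by linarith
  qed
  have h8: "(1/2+gg/2)*W = (1-gg)*A0*W" using par by simp
  have h9: "(1/2 + aa*\<mu>)*Wn = (A0+RR)*Wn" using par by simp
  have h10: "4*(1-gg)^2*aa^2*Ep^2 \<le> (1-gg)*KK*Ep^2"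
  proof -
    have "(1-gg)^2 \<le> (1-gg)" using g0 g9 by (simp add: power2_eq_square mult_left_le)
    then have "(1-gg)^2*(4*aa^2*Ep^2) \<le> (1-gg)*(4*aa^2*Ep^2)" by (rule mult_right_mono) simp
    then show ?thesis unfolding KK_def by (simp add: algebra_simps)
  qed
  have main: "A0*Wn - i4 + (1/4)*Dn + KK*E^2 + RR*Wn \<le> (1-gg)*(A0*W - k1 + (1/4)*D + KK*Ep^2) + c*E*nb + (c*(aa+tt)+KK)*E^2"
    by (rule comb[OF P h1 h2 h3 h4 h5 h6 h7 h8 h9 h10])
  have PsiN: "Psi zn z Xn e = A0*Wn - i4 + (1/4)*Dn + KK*E^2"
    unfolding Psi_def Wn_def i4_def Dn_def E_def by simp
  have PsiO: "Psi z zp X ep = A0*W - k1 + (1/4)*D + KK*Ep^2"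
    unfolding Psi_def W_def k1_def D_def Ep_def by simp
  have R0: "0 \<le> RR" using par by simp
  have t0: "0 < tt" using par by simp
  have CC: "CC = tt*(aa+tt) + KK + 4*RR*(aa+tt)^2" by (simp add: CC_def)
  show ?thesis
  proof (cases "c = tt")
    case True
    have nbb: "nb \<le> norm (zn - zs) + norm (zn - zbar)" unfolding nb_def
      using norm_triangle_ineq4[of "zn - zs" "zn - zbar"] by simp
    have nb0: "0 \<le> nb" unfolding nb_def by simp
    have "nb^2 \<le> (norm (zn - zs) + norm (zn - zbar))^2" using nbb nb0 by (simp add: power_mono)
    also have "\<dots> \<le> 5/4 * Wn + 5 * (norm (zn - zbar))^2" unfolding Wn_def by (rule sq_le_5)
    also have "(norm (zn - zbar))^2 \<le> ((aa+tt)*E)^2" using cb[OF True] unfolding E_def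
      by (simp add: power_mono)
    finally have "nb^2 \<le> 5/4 * Wn + 5 * ((aa+tt)^2*E^2)" by (simp add: power_mult_distrib)
    moreover have "0 \<le> rr" unfolding rr_def using R0 by simp
    ultimately have "rr*nb^2 \<le> rr*(5/4 * Wn + 5 * ((aa+tt)^2*E^2))" by (rule mult_left_mono)
    also have "rr*(5/4 * Wn + 5 * ((aa+tt)^2*E^2)) = RR*Wn + 4*RR*(aa+tt)^2*E^2"
      unfolding rr_def by (simp add: field_simps)
    finally have ex: "rr*nb^2 \<le> RR*Wn + 4*RR*(aa+tt)^2*E^2" .
    show ?thesis using main ex True unfolding PsiN PsiO CC nb_def[symmetric] E_def[symmetric]
      by (simp add: algebra_simps)
  next
    case False
    then have c0': "c = 0" using c by auto
    have "0 \<le> tt*(aa+tt) + 4*RR*(aa+tt)^2" using par by simp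
    moreover have "0 \<le> RR*Wn" using R0 W0 by simp
    moreover have "0 \<le> E^2" by simp
    ultimately have "0 \<le> (tt*(aa+tt) + 4*RR*(aa+tt)^2)*E^2 + RR*Wn" by simp
    then show ?thesis using main False c0' unfolding PsiN PsiO CC E_def[symmetric]
      by (simp add: algebra_simps)
  qed
qed

definition "zz xi k = sem_iter Fh Z aa gg tt z0 xi k"
definition "zpv xi k = (if k = 0 then z0 else zz xi (k-1))"
definition "ee xi k = Fh (zz xi k) (xi k) - F (zz xi k)"
definition "epv xi k = (if k = 0 then 0 else ee xi (k-1))"
definition "XX xi k = (if k = 0 then 0 else aa *\<^sub>R (F (zz xi k) - Fh (zz xi (k-1)) (xi (k-1))))"
definition "PP xi k = Psi (zz xi k) (zpv xi k) (XX xi k) (epv xi k)"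
definition "zb xi k = (if k = 0 then closest_point Z (z0 - aa *\<^sub>R F z0)
   else closest_point Z (zz xi k + gg *\<^sub>R (zz xi k - zz xi (k-1)) - (aa+tt) *\<^sub>R F (zz xi k)
        + tt *\<^sub>R Fh (zz xi (k-1)) (xi (k-1))))"

lemma zz0: "zz xi 0 = z0" unfolding zz_def by simp

lemma zzZ: "zz xi k \<in> Z"
  by (cases k) (auto simp: zz_def Let_def z0Z closest_point_in_set[OF Zcl Zne])

lemma zpvZ: "zpv xi k \<in> Z" unfolding zpv_def using zzZ z0Z by auto

lemma zz_Suc: "zz xi (Suc k) = closest_point Z (zz xi k - aa *\<^sub>R Fh (zz xi k) (xi k)
   + gg *\<^sub>R (zz xi k - zpv xi k) - tt *\<^sub>R (Fh (zz xi k) (xi k) - (if k = 0 then Fh (zz xi k) (xi k) else Fh (zz xi (k-1)) (xi (k-1)))))"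
  unfolding zz_def zpv_def by (simp add: Let_def)

lemma XX_bound: "norm (XX xi k) \<le> aa*L*norm (zz xi k - zpv xi k) + aa*norm (epv xi k)"
proof (cases "k = 0")
  case True then show ?thesis unfolding XX_def using par(1) L0 by (simp add: epv_def)
next
  case False
  define z where "z = zz xi k"
  define zp where "zp = zpv xi k"
  have zpk: "zp = zz xi (k-1)" unfolding zp_def zpv_def using False by simp
  have "XX xi k = aa *\<^sub>R ((F z - F zp) - epv xi k)" unfolding XX_def epv_def ee_def zpk z_def
    using False by (simp add: algebra_simps)
  then have "norm (XX xi k) = aa * norm ((F z - F zp) - epv xi k)" using par(1) by simp
  also have "\<dots> \<le> aa * (norm (F z - F zp) + norm (epv xi k))"
    using par(1) norm_triangle_ineq4 by (intro mult_left_mono) auto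
  also have "\<dots> \<le> aa * (L * norm (z - zp) + norm (epv xi k))"
    using par(1) lip zzZ zpvZ unfolding z_def zp_def by (intro mult_left_mono add_right_mono) auto
  finally show ?thesis unfolding z_def zp_def by (simp add: algebra_simps)
qed

lemma Psi_lower:
  assumes "norm X \<le> aa*L*norm (z - zp) + aa*norm ep"
  shows "Psi z zp X ep \<ge> (A0 - 1/8)*(norm (z - zs))\<^sup>2"
proof -
  define nw where "nw = norm (z - zs)"
  define nd where "nd = norm (z - zp)"
  define Ep where "Ep = norm ep"
  have aL: "aa*L = 1/4" using par by simp
  have "inner X (z - zs) \<le> norm X * nw" unfolding nw_def by (rule norm_cauchy_schwarz)
  also have "\<dots> \<le> (nd/4 + aa*Ep) * nw" using assms aL unfolding nd_def Ep_def nw_def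
    by (intro mult_right_mono) auto
  finally have i: "inner X (z - zs) \<le> nd/4*nw + aa*Ep*nw" by (simp add: algebra_simps)
  have t1: "nd/4*nw \<le> nd^2/4 + nw^2/16"
  proof -
    have "0 \<le> (nd/2 - nw/4)^2" by simp
    moreover have "nd^2/4 + nw^2/16 - nd/4*nw = (nd/2 - nw/4)^2" by (simp add: power2_eq_square field_simps)
    ultimately show ?thesis by linarith
  qed
  have t2: "aa*Ep*nw \<le> nw^2/16 + 4*aa^2*Ep^2"
  proof -
    have "0 \<le> (nw/4 - 2*aa*Ep)^2" by simp
    moreover have "nw^2/16 + 4*aa^2*Ep^2 - aa*Ep*nw = (nw/4 - 2*aa*Ep)^2" by (simp add: power2_eq_square field_simps)
    ultimately show ?thesis by linarith
  qed
  have "Psi z zp X ep = A0*nw^2 - inner X (z - zs) + nd^2/4 + 4*aa^2*Ep^2"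
    unfolding Psi_def KK_def nw_def nd_def Ep_def by simp
  moreover have "(A0 - 1/8)*nw^2 = A0*nw^2 - nw^2/8" by (simp add: algebra_simps)
  ultimately show ?thesis using i t1 t2 unfolding nw_def[symmetric] by linarith
qed

lemma PP_lower: "PP xi k \<ge> (A0 - 1/8)*(norm (zz xi k - zs))\<^sup>2"
  unfolding PP_def by (rule Psi_lower[OF XX_bound])

lemma PP0: "PP xi 0 = A0 * (norm (z0 - zs))\<^sup>2"
  unfolding PP_def zpv_def XX_def epv_def zz0 Psi_def by simp

lemma closed_forms: "aa = 1/(4*L)" "gg = \<mu>/(8*L+\<mu>)" "tt = 2/(8*L+\<mu>)" "RR = \<mu>/(8*L)"
   "rr = \<mu>/(10*L)" "A0 - 1/8 = 3/8 + \<mu>/(8*L)" "KK = 4*aa^2"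
  unfolding aa_def gg_def tt_def RR_def rr_def A0_def KK_def using L0 by (auto simp: field_simps)

lemma final_real:
  fixes \<sigma> \<delta> W0 :: real
  assumes "0 \<le> W0" "0 \<le> \<sigma>" "0 \<le> \<delta>"
  shows "((1-gg)^k*A0*W0 + (CC*\<sigma>\<^sup>2 + tt^2*\<delta>\<^sup>2/(4*rr))/gg)/(A0 - 1/8)
     \<le> 2*(1-gg)^k*W0 + 128*\<sigma>\<^sup>2/(\<mu>*(8*L+\<mu>)) + 4*\<delta>\<^sup>2/\<mu>\<^sup>2"
proof -
  have L: "0 < L" using L0 .
  have m: "0 < 8*L+\<mu>" using mu0 L by linarith
  define A1 where "A1 = A0 - 1/8"
  have A1: "A1 = 3/8 + \<mu>/(8*L)" unfolding A1_def using closed_forms by simp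
  have A1p: "3/8 \<le> A1" unfolding A1 using mu0 L by simp
  have A0A1: "A0 \<le> 2*A1" unfolding A1_def using A1p A1_def by simp
  have g1: "0 \<le> 1-gg" using par by simp
  have gp: "0 < gg" using par by simp
  have p1: "(1-gg)^k*A0*W0/A1 \<le> 2*(1-gg)^k*W0"
  proof -
    have "(1-gg)^k*A0*W0 \<le> (1-gg)^k*(2*A1)*W0"
      using A0A1 g1 assms(1) by (intro mult_right_mono mult_left_mono) auto
    also have "\<dots> = (2*(1-gg)^k*W0)*A1" by simp
    finally show ?thesis using pos_divide_le_eq[of A1] A1p by simp
  qed
  have CCb: "CC \<le> 1/(2*L^2)"
  proof -
    have tle: "tt \<le> aa" unfolding closed_forms using mu0 L m by (simp add: field_simps)
    have t0: "0 \<le> tt" using par by simp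
    have R8: "RR \<le> 1/8" "0 \<le> RR" unfolding closed_forms using mu0 muL L by (auto simp: field_simps)
    have "tt*(aa+tt) \<le> aa*(aa+aa)" using tle t0 par(1) by (intro mult_mono) auto
    moreover have "(aa+tt)^2 \<le> (2*aa)^2" using tle t0 par(1) by (intro power_mono) auto
    then have "4*RR*(aa+tt)^2 \<le> 4*(1/8)*(2*aa)^2" using R8 by (intro mult_mono) auto
    ultimately have "CC \<le> aa*(aa+aa) + 4*aa^2 + 4*(1/8)*(2*aa)^2" unfolding CC_def KK_def by linarith
    also have "\<dots> = 8*aa^2" by (simp add: power2_eq_square)
    also have "\<dots> = 1/(2*L^2)" unfolding closed_forms using L by (simp add: power2_eq_square field_simps)
    finally show ?thesis .
  qed
  define ss where "ss = 8*L+\<mu>"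
  have s0: "0 < ss" unfolding ss_def using m .
  have gs: "gg = \<mu>/ss" "tt = 2/ss" unfolding ss_def closed_forms by auto
  have gA: "0 < gg*A1" using gp A1p by simp
  have p2: "CC*\<sigma>\<^sup>2/(gg*A1) \<le> 128*\<sigma>\<^sup>2/(\<mu>*(8*L+\<mu>))"
  proof -
    have "(8*L+\<mu>)^2 \<le> (9*L)^2" using mu0 muL by (intro power_mono) auto
    moreover have "0 \<le> L^2" by simp
    moreover have "(9*L)^2 = 81*L^2" by (simp add: power_mult_distrib)
    ultimately have h: "ss^2 \<le> 96*L^2" unfolding ss_def by linarith
    have "1/(2*L^2) = 48/(96*L^2)" using L by simp
    also have "\<dots> \<le> 48/ss^2" using h s0 L by (intro divide_left_mono) auto
    also have "48/ss^2 \<le> 128*A1/ss^2" using A1p s0 by (simp add: divide_right_mono)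
    finally have "CC \<le> 128*A1/ss^2" using CCb by linarith
    then have "CC*\<sigma>\<^sup>2 \<le> 128*A1/ss^2*\<sigma>\<^sup>2" by (rule mult_right_mono) simp
    also have "128*A1/ss^2*\<sigma>\<^sup>2 = (128*\<sigma>\<^sup>2/(\<mu>* ss)) * (gg*A1)"
      unfolding gs using mu0 s0 by (simp add: field_simps power2_eq_square)
    finally show ?thesis unfolding ss_def[symmetric] using pos_divide_le_eq[OF gA] by simp
  qed
  have p3: "tt^2*\<delta>\<^sup>2/(4*rr)/(gg*A1) \<le> 4*\<delta>\<^sup>2/\<mu>\<^sup>2"
  proof -
    have e: "tt^2/(4*rr) = (10*L/ss)/(\<mu>* ss)" unfolding gs closed_forms using mu0 L s0
      by (simp add: field_simps power2_eq_square)
    have "10*L \<le> (4*A1)* ss"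
    proof -
      have "(3/2)*(8*L) \<le> (4*A1)* ss" using A1p L mu0 unfolding ss_def by (intro mult_mono) auto
      then show ?thesis using L by linarith
    qed
    then have "10*L/ss \<le> 4*A1" using pos_divide_le_eq[OF s0] by simp
    then have "(10*L/ss)/(\<mu>* ss) \<le> 4*A1/(\<mu>* ss)" using mu0 s0 by (intro divide_right_mono) auto
    also have "4*A1/(\<mu>* ss) = (gg*A1)*(4/\<mu>\<^sup>2)" unfolding gs using mu0 s0
      by (simp add: field_simps power2_eq_square)
    finally have "tt^2/(4*rr) \<le> (gg*A1)*(4/\<mu>\<^sup>2)" using e by simp
    then have "tt^2/(4*rr)*\<delta>\<^sup>2 \<le> (gg*A1)*(4/\<mu>\<^sup>2)*\<delta>\<^sup>2" by (rule mult_right_mono) simp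
    also have "\<dots> = (4*\<delta>\<^sup>2/\<mu>\<^sup>2)*(gg*A1)" by simp
    finally have "tt^2*\<delta>\<^sup>2/(4*rr) \<le> (4*\<delta>\<^sup>2/\<mu>\<^sup>2)*(gg*A1)" by simp
    then show ?thesis by (simp only: pos_divide_le_eq[OF gA])
  qed
  have "((1-gg)^k*A0*W0 + (CC*\<sigma>\<^sup>2 + tt^2*\<delta>\<^sup>2/(4*rr))/gg)/A1
      = (1-gg)^k*A0*W0/A1 + CC*\<sigma>\<^sup>2/(gg*A1) + tt^2*\<delta>\<^sup>2/(4*rr)/(gg*A1)"
    using gp A1p by (simp add: field_simps)
  then show ?thesis using p1 p2 p3 unfolding A1_def by linarith
qed

lemma step_iter:
  "PP xi (Suc k) + (if k \<noteq> 0 then rr*(norm (zb xi k - zs))\<^sup>2 else 0)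
     \<le> (1-gg)*PP xi k + (if k = 0 then 0 else tt)*norm (ee xi k)*norm (zb xi k - zs) + CC*(norm (ee xi k))\<^sup>2"
proof -
  note par = par
  define z where "z = zz xi k"
  define zp where "zp = zpv xi k"
  define zn where "zn = zz xi (Suc k)"
  define e where "e = ee xi k"
  define g where "g = Fh z (xi k)"
  define gp where "gp = (if k = 0 then g else Fh (zz xi (k-1)) (xi (k-1)))"
  define q where "q = aa *\<^sub>R g + tt *\<^sub>R (g - gp)"
  define y where "y = z + gg *\<^sub>R (z - zp) - q"
  define c where "c = (if k = 0 then 0 else tt)"
  define X where "X = XX xi k"
  define Xn where "Xn = aa *\<^sub>R (F zn - F z - e)"
  have ge: "g = F z + e" unfolding g_def e_def ee_def z_def by simp
  have zn: "zn = closest_point Z y" unfolding zn_def zz_Suc y_def q_def gp_def g_def z_def zp_def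
    by (simp add: algebra_simps)
  have q: "q = aa *\<^sub>R F zn - Xn + (1-gg) *\<^sub>R X + c *\<^sub>R e"
  proof (cases "k = 0")
    case True
    then show ?thesis unfolding q_def Xn_def X_def XX_def c_def gp_def ge by (simp add: algebra_simps)
  next
    case False
    have Xe: "X = aa *\<^sub>R (F z - gp)" unfolding X_def XX_def z_def gp_def using False by simp
    have tte: "tt = aa*(1-gg)" using par(8) .
    show ?thesis unfolding q_def Xn_def c_def ge Xe tte using False
      by (simp add: algebra_simps)
  qed
  have Xb: "norm X \<le> aa*L*norm (z - zp) + aa*norm (epv xi k)"
    unfolding X_def z_def zp_def by (rule XX_bound)
  have cb: "norm (zn - zb xi k) \<le> (aa+tt) * norm e" if "c = tt"
  proof -
    have k0: "k \<noteq> 0" using that par(7) unfolding c_def by (auto split: if_splits)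
    have zbk: "zb xi k = closest_point Z (z + gg *\<^sub>R (z - zp) - (aa+tt) *\<^sub>R F z + tt *\<^sub>R gp)"
      unfolding zb_def z_def zp_def zpv_def gp_def using k0 by simp
    have "norm (zn - zb xi k) \<le> dist y (z + gg *\<^sub>R (z - zp) - (aa+tt) *\<^sub>R F z + tt *\<^sub>R gp)"
      unfolding zn zbk dist_norm[symmetric] by (rule closest_point_lipschitz[OF Zcv Zcl Zne])
    also have "y - (z + gg *\<^sub>R (z - zp) - (aa+tt) *\<^sub>R F z + tt *\<^sub>R gp) = - ((aa+tt) *\<^sub>R e)"
      unfolding y_def q_def ge by (simp add: algebra_simps)
    then have "dist y (z + gg *\<^sub>R (z - zp) - (aa+tt) *\<^sub>R F z + tt *\<^sub>R gp) = (aa+tt) * norm e"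
      using par(1,7) by (simp add: dist_norm)
    finally show ?thesis .
  qed
  have gk: "Fh (zz xi k) (xi k) = F (zz xi k) + e" using ge unfolding g_def z_def .
  have XXn: "XX xi (Suc k) = Xn" unfolding XX_def Xn_def zn_def z_def by (simp add: gk algebra_simps)
  have st: "Psi zn z Xn e + (if c = tt then rr*(norm (zb xi k - zs))\<^sup>2 else 0)
     \<le> (1-gg)*Psi z zp X (epv xi k) + c*norm e*norm (zb xi k - zs) + CC*(norm e)\<^sup>2"
    by (rule step[of z zp zn y q Xn X c e "epv xi k" "zb xi k"])
       (use zzZ zpvZ zn q Xb cb in \<open>auto simp: z_def zp_def y_def Xn_def c_def\<close>)
  have "c = tt \<longleftrightarrow> k \<noteq> 0" unfolding c_def using par(7) by auto
  moreover have "PP xi (Suc k) = Psi zn z Xn e"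
    unfolding PP_def XXn zn_def z_def zpv_def epv_def e_def by simp
  moreover have "PP xi k = Psi z zp X (epv xi k)" unfolding PP_def z_def zp_def X_def by simp
  ultimately show ?thesis using st unfolding c_def e_def by (auto split: if_splits)
qed

end



context sem begin

lemma zz_cong: "(\<And>i. i < j \<Longrightarrow> xi i = xi' i) \<Longrightarrow> zz xi j = zz xi' j"
proof (induction j rule: less_induct)
  case (less j)
  show ?case
  proof (cases j)
    case 0 then show ?thesis by (simp add: zz0)
  next
    case (Suc k)
    have a: "zz xi k = zz xi' k" using less Suc by auto
    have b: "k \<noteq> 0 \<Longrightarrow> zz xi (k-1) = zz xi' (k-1)" using less Suc by auto
    have c: "xi k = xi' k" using less Suc by auto
    have d: "k \<noteq> 0 \<Longrightarrow> xi (k-1) = xi' (k-1)" using less Suc by auto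
    show ?thesis unfolding Suc zz_Suc zpv_def using a b c d by (cases "k = 0") auto
  qed
qed

lemma PP_cong: "(\<And>i. i < k \<Longrightarrow> xi i = xi' i) \<Longrightarrow> PP xi k = PP xi' k"
proof -
  assume h: "\<And>i. i < k \<Longrightarrow> xi i = xi' i"
  have a: "zz xi k = zz xi' k" by (rule zz_cong) (use h in auto)
  have b: "k \<noteq> 0 \<Longrightarrow> zz xi (k-1) = zz xi' (k-1)" by (rule zz_cong) (use h in auto)
  have d: "k \<noteq> 0 \<Longrightarrow> xi (k-1) = xi' (k-1)" using h by auto
  show ?thesis unfolding PP_def zpv_def XX_def epv_def ee_def using a b d by (cases "k = 0") auto
qed

lemma zb_cong: "(\<And>i. i < k \<Longrightarrow> xi i = xi' i) \<Longrightarrow> zb xi k = zb xi' k"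
proof -
  assume h: "\<And>i. i < k \<Longrightarrow> xi i = xi' i"
  have a: "zz xi k = zz xi' k" by (rule zz_cong) (use h in auto)
  have b: "k \<noteq> 0 \<Longrightarrow> zz xi (k-1) = zz xi' (k-1)" by (rule zz_cong) (use h in auto)
  have d: "k \<noteq> 0 \<Longrightarrow> xi (k-1) = xi' (k-1)" using h by auto
  show ?thesis unfolding zb_def using a b d by (cases "k = 0") auto
qed

definition "FP = F \<circ> closest_point Z"

lemma FP_cont: "continuous_on UNIV FP"
proof -
  have "L-lipschitz_on Z F" unfolding lipschitz_on_def using lip L0 by (auto simp: dist_norm)
  then have "continuous_on Z F" by (rule lipschitz_on_continuous_on)
  then show ?thesis unfolding FP_def comp_def
    by (rule continuous_on_compose2[OF _ continuous_on_closest_point[OF Zcv Zcl Zne]])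
       (auto simp: closest_point_in_set[OF Zcl Zne])
qed

lemma FP_eq: "z \<in> Z \<Longrightarrow> FP z = F z"
  unfolding FP_def using closest_point_self[of z Z] by simp

end




locale sem_prob = sem Z F \<mu> L zs Fh z0 for Z :: "'a::euclidean_space set" and F \<mu> L zs
    and Fh :: "'a \<Rightarrow> 's \<Rightarrow> 'a" and z0 +
  fixes M :: "'w measure" and S :: "'s measure" and \<xi> :: "nat \<Rightarrow> 'w \<Rightarrow> 's" and \<delta> \<sigma> :: real
  assumes P: "prob_space M"
    and Fh_meas: "(\<lambda>p. Fh (fst p) (snd p)) \<in> borel_measurable (borel \<Otimes>\<^sub>M S)"
    and xi_meas: "\<And>j. \<xi> j \<in> measurable M S"
    and xi_indep: "prob_space.indep_vars M (\<lambda>_. S) \<xi> UNIV"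
    and dsig: "0 \<le> \<delta>" "0 \<le> \<sigma>"
    and bias: "\<forall>j. \<forall>z\<in>Z. (\<integral>\<^sup>+ \<omega>. ennreal (norm (Fh z (\<xi> j \<omega>) - F z)) \<partial>M) \<le> ennreal \<delta>"
    and var: "\<forall>j. \<forall>z\<in>Z. (\<integral>\<^sup>+ \<omega>. ennreal ((norm (Fh z (\<xi> j \<omega>) - F z))\<^sup>2) \<partial>M) \<le> ennreal (\<sigma>\<^sup>2)"
begin

lemma ennreal_sub_aux:
  fixes X :: ennreal and a B :: real
  assumes "X + ennreal a \<le> ennreal B" "0 \<le> a"
  shows "X \<le> ennreal (B - a)"
proof (cases X)
  case (real v)
  then have "ennreal (v + a) \<le> ennreal B" using assms by (simp add: ennreal_plus)
  then have "v + a \<le> B \<or> (v + a \<le> 0)" by (metis ennreal_le_iff ennreal_neg linorder_le_cases ennreal_eq_0_iff order_antisym zero_le)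
  then show ?thesis
  proof
    assume "v + a \<le> B" then show ?thesis using real by (auto intro!: ennreal_leI)
  next
    assume "v + a \<le> 0" then have "v = 0" using real assms by auto
    then show ?thesis using real by simp
  qed
next
  case top
  then show ?thesis using assms by (simp add: top_unique)
qed

lemma cp_meas: "closest_point Z \<in> borel_measurable borel"
  by (rule borel_measurable_continuous_onI[OF continuous_on_closest_point[OF Zcv Zcl Zne]])

lemma FP_meas: "FP \<in> borel_measurable borel"
  by (rule borel_measurable_continuous_onI[OF FP_cont])

lemma Fh_comp: "f \<in> borel_measurable N \<Longrightarrow> g \<in> measurable N S \<Longrightarrow> (\<lambda>x. Fh (f x) (g x)) \<in> borel_measurable N"
  using measurable_compose[OF measurable_Pair[of f N borel g S] Fh_meas] by simp

abbreviation "PS I \<equiv> PiM I (\<lambda>_. S)"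

lemma comp_meas: "i \<in> I \<Longrightarrow> (\<lambda>x. x i) \<in> measurable (PS I) S"
  by (rule measurable_component_singleton)

lemma zz_meas: "{..<j} \<subseteq> I \<Longrightarrow> (\<lambda>x. zz x j) \<in> borel_measurable (PS I)"
proof (induction j rule: less_induct)
  case (less j)
  show ?case
  proof (cases j)
    case 0 then show ?thesis by (simp add: zz0)
  next
    case (Suc k)
    have m1: "(\<lambda>x. zz x k) \<in> borel_measurable (PS I)"
      using less.IH[of k] less.prems Suc by (auto simp: subset_eq)
    have c1: "(\<lambda>x. x k) \<in> measurable (PS I) S" using less Suc by (intro comp_meas) auto
    have f1: "(\<lambda>x. Fh (zz x k) (x k)) \<in> borel_measurable (PS I)" by (rule Fh_comp[OF m1 c1])
    show ?thesis
    proof (cases "k = 0")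
      case True
      have "(\<lambda>x. zz x j) = (\<lambda>x. closest_point Z (zz x k - aa *\<^sub>R Fh (zz x k) (x k)))"
        unfolding Suc zz_Suc zpv_def using True by (simp add: zz0)
      also have "\<dots> \<in> borel_measurable (PS I)"
        by (rule measurable_compose[OF _ cp_meas]) (use m1 f1 in measurable)
      finally show ?thesis .
    next
      case False
      have m2: "(\<lambda>x. zz x (k-1)) \<in> borel_measurable (PS I)"
        using less.IH[of "k-1"] less.prems Suc False by (auto simp: subset_eq)
      have c2: "(\<lambda>x. x (k-1)) \<in> measurable (PS I) S" using less Suc False by (intro comp_meas) auto
      have f2: "(\<lambda>x. Fh (zz x (k-1)) (x (k-1))) \<in> borel_measurable (PS I)" by (rule Fh_comp[OF m2 c2])
      have "(\<lambda>x. zz x j) = (\<lambda>x. closest_point Z (zz x k - aa *\<^sub>R Fh (zz x k) (x k)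
          + gg *\<^sub>R (zz x k - zz x (k-1)) - tt *\<^sub>R (Fh (zz x k) (x k) - Fh (zz x (k-1)) (x (k-1)))))"
        unfolding Suc zz_Suc zpv_def using False by simp
      also have "\<dots> \<in> borel_measurable (PS I)"
        by (rule measurable_compose[OF _ cp_meas]) (use m1 f1 m2 f2 in measurable)
      finally show ?thesis .
    qed
  qed
qed

lemma F_zz_meas: "{..<j} \<subseteq> I \<Longrightarrow> (\<lambda>x. F (zz x j)) \<in> borel_measurable (PS I)"
proof -
  assume h: "{..<j} \<subseteq> I"
  have "(\<lambda>x. F (zz x j)) = (\<lambda>x. FP (zz x j))" using FP_eq zzZ by auto
  also have "\<dots> \<in> borel_measurable (PS I)" by (rule measurable_compose[OF zz_meas[OF h] FP_meas])
  finally show ?thesis .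
qed

lemma PP_meas: "{..<k} \<subseteq> I \<Longrightarrow> (\<lambda>x. PP x k) \<in> borel_measurable (PS I)"
proof -
  assume h: "{..<k} \<subseteq> I"
  note m1 = zz_meas[OF h] and F1 = F_zz_meas[OF h]
  show ?thesis
  proof (cases "k = 0")
    case True then show ?thesis unfolding PP_def zpv_def XX_def epv_def by (simp add: zz0)
  next
    case False
    have h': "{..<k-1} \<subseteq> I" using h by auto
    note m2 = zz_meas[OF h'] and F2 = F_zz_meas[OF h']
    have c2: "(\<lambda>x. x (k-1)) \<in> measurable (PS I) S" using h False by (intro comp_meas) auto
    have f2: "(\<lambda>x. Fh (zz x (k-1)) (x (k-1))) \<in> borel_measurable (PS I)" by (rule Fh_comp[OF m2 c2])
    have "(\<lambda>x. PP x k) = (\<lambda>x. A0*(norm (zz x k - zs))\<^sup>2 - inner (aa *\<^sub>R (F (zz x k) - Fh (zz x (k-1)) (x (k-1)))) (zz x k - zs)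
       + 1/4*(norm (zz x k - zz x (k-1)))\<^sup>2 + KK*(norm (Fh (zz x (k-1)) (x (k-1)) - F (zz x (k-1))))\<^sup>2)"
      unfolding PP_def Psi_def zpv_def XX_def epv_def ee_def using False by simp
    also have "\<dots> \<in> borel_measurable (PS I)" using m1 F1 m2 F2 f2 by measurable
    finally show ?thesis .
  qed
qed

definition "D i = distr M S (\<xi> i)"
definition "NN = CC*\<sigma>\<^sup>2 + tt^2*\<delta>\<^sup>2/(4*rr)"

lemma probD: "prob_space (D i)" unfolding D_def by (rule prob_space.prob_space_distr[OF P xi_meas])

lemma sets_D: "sets (D i) = sets S" unfolding D_def by simp
lemma space_D: "space (D i) = space S" unfolding D_def by simp

lemma PD: "product_sigma_finite D"
  unfolding product_sigma_finite_def using probD prob_space_imp_sigma_finite by blast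

lemma sets_PD: "sets (PiM I D) = sets (PS I)" by (rule sets_PiM_cong) (auto simp: sets_D)
lemma space_PD: "space (PiM I D) = space (PS I)" by (rule sets_eq_imp_space_eq[OF sets_PD])

lemma meas_PD: "f \<in> borel_measurable (PS I) \<Longrightarrow> f \<in> borel_measurable (PiM I D)"
  using measurable_cong_sets[OF sets_PD refl] by blast

lemma inner_step:
  assumes x: "x \<in> space (PiM {..<k} D)"
  shows "(\<integral>\<^sup>+y. ennreal (PP (x(k:=y)) (Suc k)) \<partial>D k) \<le> ennreal ((1-gg)*PP x k + NN)"
proof -
  interpret prob_space M by (rule P)
  note par = par
  have xS: "x \<in> space (PS {..<k})" using x space_PD by blast
  have hm: "(\<lambda>y. ennreal (PP (x(k:=y)) (Suc k))) \<in> borel_measurable S"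
  proof -
    have "(\<lambda>x'. PP x' (Suc k)) \<in> borel_measurable (PS (insert k {..<k}))" by (rule PP_meas) auto
    from measurable_compose[OF measurable_component_update[OF xS, of k] this] show ?thesis by simp
  qed
  define z where "z = zz x k"
  have zZ: "z \<in> Z" unfolding z_def by (rule zzZ)
  define u where "u \<omega> = norm (Fh z (\<xi> k \<omega>) - F z)" for \<omega>
  have fm: "(\<lambda>\<omega>. Fh z (\<xi> k \<omega>)) \<in> borel_measurable M" by (rule Fh_comp[OF measurable_const xi_meas]) simp
  have um: "u \<in> borel_measurable M" unfolding u_def using fm by measurable
  define nb where "nb = norm (zb x k - zs)"
  define c where "c = (if k = 0 then 0 else tt)"
  define a where "a = (if k \<noteq> 0 then rr*nb\<^sup>2 else 0)"
  have c0: "0 \<le> c" unfolding c_def using par by auto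
  have CC0: "0 \<le> CC" unfolding CC_def KK_def using par by auto
  have a0: "0 \<le> a" unfolding a_def rr_def RR_def using mu0 L0 by auto
  have rrp: "0 < rr" unfolding rr_def RR_def using mu0 L0 by auto
  have PPx: "0 \<le> PP x k" using PP_lower[of x k] closed_forms(6) mu0 L0
    by (smt (verit) divide_nonneg_nonneg mult_nonneg_nonneg zero_le_power2)
  have pw: "PP (x(k := \<xi> k \<omega>)) (Suc k) + a \<le> (1-gg)*PP x k + c*nb*u \<omega> + CC*(u \<omega>)\<^sup>2" for \<omega>
  proof -
    let ?x' = "x(k := \<xi> k \<omega>)"
    have e1: "PP ?x' k = PP x k" by (rule PP_cong) auto
    have e2: "zb ?x' k = zb x k" by (rule zb_cong) auto
    have e3: "zz ?x' k = z" unfolding z_def by (rule zz_cong) auto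
    have e4: "ee ?x' k = Fh z (\<xi> k \<omega>) - F z" unfolding ee_def e3 by simp
    from step_iter[of ?x' k] show ?thesis
      unfolding e1 e2 e4 u_def[symmetric] a_def c_def nb_def by (auto simp: ac_simps)
  qed
  have eq1: "(\<integral>\<^sup>+y. ennreal (PP (x(k:=y)) (Suc k)) \<partial>D k) = (\<integral>\<^sup>+\<omega>. ennreal (PP (x(k:=\<xi> k \<omega>)) (Suc k)) \<partial>M)"
    unfolding D_def by (rule nn_integral_distr[OF xi_meas]) (use hm in simp)
  have PPn: "0 \<le> PP x' j" for x' j using PP_lower[of x' j] closed_forms(6) mu0 L0
    by (smt (verit) divide_nonneg_nonneg mult_nonneg_nonneg zero_le_power2)
  have "(\<integral>\<^sup>+\<omega>. ennreal (PP (x(k:=\<xi> k \<omega>)) (Suc k)) \<partial>M) + ennreal a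
      = (\<integral>\<^sup>+\<omega>. ennreal (PP (x(k:=\<xi> k \<omega>)) (Suc k)) + ennreal a \<partial>M)"
    using nn_integral_add[of "\<lambda>\<omega>. ennreal (PP (x(k:=\<xi> k \<omega>)) (Suc k))" M "\<lambda>_. ennreal a"]
      measurable_compose[OF xi_meas hm] by (simp add: emeasure_space_1)
  also have "\<dots> \<le> (\<integral>\<^sup>+\<omega>. ennreal ((1-gg)*PP x k) + ennreal (c*nb) * ennreal (u \<omega>) + ennreal CC * ennreal ((u \<omega>)\<^sup>2) \<partial>M)"
  proof (rule nn_integral_mono)
    fix \<omega>
    have "ennreal (PP (x(k:=\<xi> k \<omega>)) (Suc k)) + ennreal a = ennreal (PP (x(k:=\<xi> k \<omega>)) (Suc k) + a)"
      using PPn a0 by (simp add: ennreal_plus)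
    also have "\<dots> \<le> ennreal ((1-gg)*PP x k + c*nb*u \<omega> + CC*(u \<omega>)\<^sup>2)" using pw by (rule ennreal_leI)
    also have "\<dots> = ennreal ((1-gg)*PP x k) + ennreal (c*nb) * ennreal (u \<omega>) + ennreal CC * ennreal ((u \<omega>)\<^sup>2)"
    proof -
      have n1: "0 \<le> (1-gg)*PP x k" using PPx par by simp
      have n2: "0 \<le> c*nb*u \<omega>" using c0 unfolding nb_def u_def by simp
      have n3: "0 \<le> CC*(u \<omega>)\<^sup>2" using CC0 by simp
      have "ennreal ((1-gg)*PP x k + c*nb*u \<omega> + CC*(u \<omega>)\<^sup>2)
          = ennreal ((1-gg)*PP x k) + ennreal (c*nb*u \<omega>) + ennreal (CC*(u \<omega>)\<^sup>2)"
        using n1 n2 n3 by (simp add: ennreal_plus)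
      also have "ennreal (c*nb*u \<omega>) = ennreal (c*nb) * ennreal (u \<omega>)"
        using c0 unfolding nb_def u_def by (simp add: ennreal_mult)
      also have "ennreal (CC*(u \<omega>)\<^sup>2) = ennreal CC * ennreal ((u \<omega>)\<^sup>2)"
        using CC0 by (simp add: ennreal_mult)
      finally show ?thesis .
    qed
    finally show "ennreal (PP (x(k:=\<xi> k \<omega>)) (Suc k)) + ennreal a \<le> ennreal ((1-gg)*PP x k) + ennreal (c*nb) * ennreal (u \<omega>) + ennreal CC * ennreal ((u \<omega>)\<^sup>2)" .
  qed
  also have "\<dots> = ennreal ((1-gg)*PP x k) + ennreal (c*nb) * (\<integral>\<^sup>+\<omega>. ennreal (u \<omega>) \<partial>M) + ennreal CC * (\<integral>\<^sup>+\<omega>. ennreal ((u \<omega>)\<^sup>2) \<partial>M)"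
    using um by (simp add: nn_integral_add nn_integral_cmult emeasure_space_1)
  also have "\<dots> \<le> ennreal ((1-gg)*PP x k) + ennreal (c*nb) * ennreal \<delta> + ennreal CC * ennreal (\<sigma>\<^sup>2)"
    using bias var zZ unfolding u_def by (intro add_mono mult_left_mono order_refl) auto
  also have "\<dots> = ennreal ((1-gg)*PP x k + c*nb*\<delta> + CC*\<sigma>\<^sup>2)"
  proof -
    have n1: "0 \<le> (1-gg)*PP x k" using PPx par by simp
    have n2: "0 \<le> c*nb" using c0 unfolding nb_def by simp
    show ?thesis using n1 n2 CC0 dsig c0
      by (simp add: ennreal_plus ennreal_mult mult_nonneg_nonneg)
  qed
  finally have "(\<integral>\<^sup>+\<omega>. ennreal (PP (x(k:=\<xi> k \<omega>)) (Suc k)) \<partial>M) \<le> ennreal ((1-gg)*PP x k + c*nb*\<delta> + CC*\<sigma>\<^sup>2 - a)"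
    using a0 by (rule ennreal_sub_aux)
  also have "\<dots> \<le> ennreal ((1-gg)*PP x k + NN)"
  proof (rule ennreal_leI)
    have "c*nb*\<delta> - a \<le> tt^2*\<delta>\<^sup>2/(4*rr)"
    proof (cases "k = 0")
      case True then show ?thesis unfolding c_def a_def using rrp by simp
    next
      case False
      have "0 \<le> rr*(nb - tt*\<delta>/(2*rr))^2" using rrp by simp
      moreover have "rr*(nb - tt*\<delta>/(2*rr))^2 = tt^2*\<delta>\<^sup>2/(4*rr) - (tt*nb*\<delta> - rr*nb\<^sup>2)"
        using rrp by (simp add: power2_eq_square field_simps)
      ultimately show ?thesis unfolding c_def a_def using False by simp
    qed
    then show "(1-gg)*PP x k + c*nb*\<delta> + CC*\<sigma>\<^sup>2 - a \<le> (1-gg)*PP x k + NN" unfolding NN_def by simp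
  qed
  finally show ?thesis using eq1 by simp
qed

lemma PS_prob: "prob_space (PiM I D)" by (rule prob_space_PiM) (rule probD)

lemma PPn: "0 \<le> PP x' j" using PP_lower[of x' j] closed_forms(6) mu0 L0
  by (smt (verit) divide_nonneg_nonneg mult_nonneg_nonneg zero_le_power2)

lemma NN0: "0 \<le> NN" unfolding NN_def CC_def KK_def rr_def RR_def using par mu0 L0 dsig by auto

lemma recursion:
  "(\<integral>\<^sup>+x. ennreal (PP x k) \<partial>PiM {..<k} D) \<le> ennreal ((1-gg)^k*A0*(norm (z0 - zs))\<^sup>2 + NN/gg)"
proof (induction k)
  case 0
  interpret prob_space "PiM {} D" by (rule PS_prob)
  have "(\<integral>\<^sup>+x. ennreal (PP x 0) \<partial>PiM {..<0} D) = ennreal (A0*(norm (z0 - zs))\<^sup>2)"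
    by (simp add: PP0 emeasure_space_1)
  also have "\<dots> \<le> ennreal ((1-gg)^0*A0*(norm (z0 - zs))\<^sup>2 + NN/gg)"
    using NN0 par by (intro ennreal_leI) auto
  finally show ?case .
next
  case (Suc k)
  interpret PD: product_sigma_finite D by (rule PD)
  interpret prob_space "PiM {..<k} D" by (rule PS_prob)
  define W0 where "W0 = (norm (z0 - zs))\<^sup>2"
  have g1: "0 \<le> 1-gg" using par by simp
  have fm: "(\<lambda>x. ennreal (PP x (Suc k))) \<in> borel_measurable (PiM (insert k {..<k}) D)"
    by (intro measurable_compose[OF meas_PD[OF PP_meas] measurable_ennreal]) auto
  have pm: "(\<lambda>x. PP x k) \<in> borel_measurable (PiM {..<k} D)" by (intro meas_PD PP_meas) auto
  have "(\<integral>\<^sup>+x. ennreal (PP x (Suc k)) \<partial>PiM {..<Suc k} D)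
      = (\<integral>\<^sup>+x. (\<integral>\<^sup>+y. ennreal (PP (x(k:=y)) (Suc k)) \<partial>D k) \<partial>PiM {..<k} D)"
    unfolding lessThan_Suc by (rule PD.product_nn_integral_insert[OF _ _ fm]) auto
  also have "\<dots> \<le> (\<integral>\<^sup>+x. ennreal ((1-gg)*PP x k + NN) \<partial>PiM {..<k} D)"
    by (rule nn_integral_mono) (rule inner_step)
  also have "\<dots> = (\<integral>\<^sup>+x. ennreal (1-gg) * ennreal (PP x k) + ennreal NN \<partial>PiM {..<k} D)"
    using g1 NN0 PPn by (intro nn_integral_cong) (simp add: ennreal_plus ennreal_mult)
  also have "\<dots> = ennreal (1-gg) * (\<integral>\<^sup>+x. ennreal (PP x k) \<partial>PiM {..<k} D) + ennreal NN"
    using pm by (simp add: nn_integral_add nn_integral_cmult emeasure_space_1)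
  also have "\<dots> \<le> ennreal (1-gg) * ennreal ((1-gg)^k*A0*W0 + NN/gg) + ennreal NN"
    using Suc.IH unfolding W0_def by (intro add_mono mult_left_mono order_refl) auto
  also have "\<dots> = ennreal ((1-gg)^(Suc k)*A0*W0 + NN/gg)"
  proof -
    have nb: "0 \<le> (1-gg)^k*A0*W0 + NN/gg" using g1 NN0 par unfolding W0_def A0_def
      by (intro add_nonneg_nonneg mult_nonneg_nonneg divide_nonneg_nonneg) (auto simp: L0 mu0 less_imp_le)
    have "ennreal (1-gg) * ennreal ((1-gg)^k*A0*W0 + NN/gg) + ennreal NN
        = ennreal ((1-gg)*((1-gg)^k*A0*W0 + NN/gg) + NN)"
      using nb g1 NN0 by (simp add: ennreal_plus ennreal_mult)
    also have "(1-gg)*((1-gg)^k*A0*W0 + NN/gg) + NN = (1-gg)^(Suc k)*A0*W0 + NN/gg"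
      using par by (simp add: field_simps)
    finally show ?thesis .
  qed
  finally show ?case unfolding W0_def .
qed

lemma main_bound:
  "(\<integral>\<^sup>+\<omega>. ennreal ((norm (zz (\<lambda>j. \<xi> j \<omega>) k - zs))\<^sup>2) \<partial>M)
     \<le> ennreal (((1-gg)^k*A0*(norm (z0 - zs))\<^sup>2 + NN/gg)/(A0 - 1/8))"
proof -
  interpret prob_space M by (rule P)
  define W0 where "W0 = (norm (z0 - zs))\<^sup>2"
  define A1 where "A1 = A0 - 1/8"
  have A1p: "0 < A1" unfolding A1_def closed_forms(6) using mu0 L0 by (simp add: add_pos_nonneg)
  have A0A1: "A1 \<le> A0" unfolding A1_def by simp
  have W00: "0 \<le> W0" unfolding W0_def by simp
  have g1: "0 \<le> 1-gg" using par by simp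
  have b0: "0 \<le> NN/gg" using NN0 par by simp
  show ?thesis
  proof (cases "k = 0")
    case True
    have "(\<integral>\<^sup>+\<omega>. ennreal ((norm (zz (\<lambda>j. \<xi> j \<omega>) k - zs))\<^sup>2) \<partial>M) = ennreal W0"
      using True by (simp add: zz0 W0_def emeasure_space_1)
    also have "\<dots> \<le> ennreal ((A0*W0 + NN/gg)/A1)"
    proof (rule ennreal_leI)
      have "W0*A1 \<le> A0*W0 + NN/gg" using A0A1 W00 b0 by (metis add_increasing2 mult.commute mult_left_mono)
      then show "W0 \<le> (A0*W0 + NN/gg)/A1" using A1p by (simp add: pos_le_divide_eq)
    qed
    finally show ?thesis using True unfolding W0_def A1_def by simp
  next
    case False
    define T where "T \<omega> = restrict (\<lambda>j. \<xi> j \<omega>) {..<k}" for \<omega>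
    have Tm: "T \<in> measurable M (PS {..<k})" unfolding T_def
      by (rule measurable_restrict) (rule xi_meas)
    have dT: "distr M (PS {..<k}) T = PiM {..<k} D"
    proof -
      have ind: "prob_space.indep_vars M (\<lambda>_. S) \<xi> {..<k}" by (rule prob_space.indep_vars_subset[OF P xi_indep]) auto
      have "distr M (\<Pi>\<^sub>M i\<in>{..<k}. S) (\<lambda>x. \<lambda>i\<in>{..<k}. \<xi> i x) = (\<Pi>\<^sub>M i\<in>{..<k}. distr M S (\<xi> i))"
        using prob_space.indep_vars_iff_distr_eq_PiM'[OF P, where I="{..<k}" and M'="\<lambda>_. S" and X=\<xi>] ind False xi_meas by auto
      then show ?thesis unfolding T_def D_def by simp
    qed
    define g where "g x = ennreal ((norm (zz x k - zs))\<^sup>2)" for x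
    have gm: "g \<in> borel_measurable (PS {..<k})" unfolding g_def using zz_meas[of k "{..<k}"] by measurable
    have "(\<integral>\<^sup>+\<omega>. ennreal ((norm (zz (\<lambda>j. \<xi> j \<omega>) k - zs))\<^sup>2) \<partial>M) = (\<integral>\<^sup>+\<omega>. g (T \<omega>) \<partial>M)"
    proof (rule nn_integral_cong)
      fix \<omega> show "ennreal ((norm (zz (\<lambda>j. \<xi> j \<omega>) k - zs))\<^sup>2) = g (T \<omega>)"
        unfolding g_def T_def by (subst zz_cong[of k "\<lambda>j. \<xi> j \<omega>" "restrict (\<lambda>j. \<xi> j \<omega>) {..<k}"]) auto
    qed
    also have "\<dots> = (\<integral>\<^sup>+x. g x \<partial>distr M (PS {..<k}) T)"
      by (rule nn_integral_distr[symmetric, OF Tm]) (use gm in simp)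
    also have "\<dots> = (\<integral>\<^sup>+x. g x \<partial>PiM {..<k} D)" unfolding dT ..
    also have "\<dots> \<le> (\<integral>\<^sup>+x. ennreal (1/A1) * ennreal (PP x k) \<partial>PiM {..<k} D)"
    proof (rule nn_integral_mono)
      fix x
      have "A1 * (norm (zz x k - zs))\<^sup>2 \<le> PP x k" using PP_lower[of x k] unfolding A1_def .
      then have "(norm (zz x k - zs))\<^sup>2 \<le> 1/A1 * PP x k" using A1p by (simp add: field_simps)
      then show "g x \<le> ennreal (1/A1) * ennreal (PP x k)" unfolding g_def using A1p PPn
        by (simp add: ennreal_mult[symmetric] ennreal_leI)
    qed
    also have "\<dots> = ennreal (1/A1) * (\<integral>\<^sup>+x. ennreal (PP x k) \<partial>PiM {..<k} D)"
      by (rule nn_integral_cmult) (intro measurable_compose[OF meas_PD[OF PP_meas] measurable_ennreal], auto)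
    also have "\<dots> \<le> ennreal (1/A1) * ennreal ((1-gg)^k*A0*W0 + NN/gg)"
      using recursion[of k] unfolding W0_def by (rule mult_left_mono) simp
    also have "\<dots> = ennreal (((1-gg)^k*A0*W0 + NN/gg)/A1)"
    proof -
      have "0 \<le> (1-gg)^k*A0*W0 + NN/gg" using g1 W00 b0 A1p A0A1 by simp
      then show ?thesis using A1p by (simp add: ennreal_mult[symmetric])
    qed
    finally show ?thesis unfolding W0_def A1_def .
  qed
qed

lemma final:
  "\<forall>k. (\<integral>\<^sup>+ \<omega>. ennreal ((norm (sem_iter Fh Z (1 / (4 * L))
                 (1 / (8 * (L / \<mu> + 1 / 8)))
                 ((1 / (4 * L)) / (1 + (1 / 8) / (L / \<mu>)))
                 z0 (\<lambda>j. \<xi> j \<omega>) k - zs))\<^sup>2) \<partial>M)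
          \<le> ennreal (2 * (1 - 1 / (8 * (L / \<mu>) + 1)) ^ k * (norm (z0 - zs))\<^sup>2
                     + 128 * \<sigma>\<^sup>2 / (\<mu> * (8 * L + \<mu>)) + 4 * \<delta>\<^sup>2 / \<mu>\<^sup>2)"
proof
  fix k
  have m: "0 < 8*L+\<mu>" using mu0 L0 by linarith
  have e1: "1 / (4 * L) = aa" using closed_forms by simp
  have e2: "1 / (8 * (L / \<mu> + 1 / 8)) = gg" unfolding closed_forms using mu0 L0 m
    by (simp add: field_simps)
  have e3: "aa / (1 + (1 / 8) / (L / \<mu>)) = tt" unfolding closed_forms using mu0 L0 m
    by (simp add: field_simps)
  have e4: "1 - 1 / (8 * (L / \<mu>) + 1) = 1 - gg" unfolding closed_forms using mu0 L0 m
    by (simp add: field_simps)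
  have "(\<integral>\<^sup>+ \<omega>. ennreal ((norm (zz (\<lambda>j. \<xi> j \<omega>) k - zs))\<^sup>2) \<partial>M)
     \<le> ennreal (((1-gg)^k*A0*(norm (z0 - zs))\<^sup>2 + NN/gg)/(A0 - 1/8))" by (rule main_bound)
  also have "\<dots> \<le> ennreal (2*(1-gg)^k*(norm (z0 - zs))\<^sup>2 + 128*\<sigma>\<^sup>2/(\<mu>*(8*L+\<mu>)) + 4*\<delta>\<^sup>2/\<mu>\<^sup>2)"
    unfolding NN_def by (intro ennreal_leI final_real) (use dsig in auto)
  finally show "(\<integral>\<^sup>+ \<omega>. ennreal ((norm (sem_iter Fh Z (1 / (4 * L))
                 (1 / (8 * (L / \<mu> + 1 / 8)))
                 ((1 / (4 * L)) / (1 + (1 / 8) / (L / \<mu>)))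
                 z0 (\<lambda>j. \<xi> j \<omega>) k - zs))\<^sup>2) \<partial>M)
          \<le> ennreal (2 * (1 - 1 / (8 * (L / \<mu>) + 1)) ^ k * (norm (z0 - zs))\<^sup>2
                     + 128 * \<sigma>\<^sup>2 / (\<mu> * (8 * L + \<mu>)) + 4 * \<delta>\<^sup>2 / \<mu>\<^sup>2)"
    unfolding e1 e2 e3 e4 zz_def[symmetric] .
qed

end

theorem proposition2:
  fixes Z :: "'a::euclidean_space set"
    and F :: "'a \<Rightarrow> 'a"
    and Fh :: "'a \<Rightarrow> 's \<Rightarrow> 'a"
    and M :: "'w measure" and S :: "'s measure"
    and \<xi> :: "nat \<Rightarrow> 'w \<Rightarrow> 's"
    and \<mu> L \<delta> \<sigma> :: real and zs z0 :: 'a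
  assumes Z: "Z \<noteq> {}" "closed Z" "convex Z"
    and mu: "0 < \<mu>" "\<mu> \<le> L"
    and strong_mono: "\<forall>z\<in>Z. \<forall>z'\<in>Z. inner (F z - F z') (z - z') \<ge> \<mu> * (norm (z - z'))\<^sup>2"
    and lipschitz: "\<forall>z\<in>Z. \<forall>z'\<in>Z. norm (F z - F z') \<le> L * norm (z - z')"
    and zs: "zs \<in> Z" "\<forall>z\<in>Z. inner (F zs) (z - zs) \<ge> 0"
    and P: "prob_space M"
    and Fh_meas: "(\<lambda>p. Fh (fst p) (snd p)) \<in> borel_measurable (borel \<Otimes>\<^sub>M S)"
    and xi_meas: "\<And>j. \<xi> j \<in> measurable M S"
    and xi_indep: "prob_space.indep_vars M (\<lambda>_. S) \<xi> UNIV"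
    and dsig: "0 \<le> \<delta>" "0 \<le> \<sigma>"
    and bias: "\<forall>j. \<forall>z\<in>Z. (\<integral>\<^sup>+ \<omega>. ennreal (norm (Fh z (\<xi> j \<omega>) - F z)) \<partial>M) \<le> ennreal \<delta>"
    and var: "\<forall>j. \<forall>z\<in>Z. (\<integral>\<^sup>+ \<omega>. ennreal ((norm (Fh z (\<xi> j \<omega>) - F z))\<^sup>2) \<partial>M) \<le> ennreal (\<sigma>\<^sup>2)"
    and z0: "z0 \<in> Z"
  shows "\<forall>k. (\<integral>\<^sup>+ \<omega>. ennreal ((norm (sem_iter Fh Z (1 / (4 * L))
                 (1 / (8 * (L / \<mu> + 1 / 8)))
                 ((1 / (4 * L)) / (1 + (1 / 8) / (L / \<mu>)))
                 z0 (\<lambda>j. \<xi> j \<omega>) k - zs))\<^sup>2) \<partial>M)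
          \<le> ennreal (2 * (1 - 1 / (8 * (L / \<mu>) + 1)) ^ k * (norm (z0 - zs))\<^sup>2
                     + 128 * \<sigma>\<^sup>2 / (\<mu> * (8 * L + \<mu>)) + 4 * \<delta>\<^sup>2 / \<mu>\<^sup>2)"
  proof -
  have xm: "\<forall>j. \<xi> j \<in> measurable M S" using xi_meas by blast
  interpret sem_prob Z F \<mu> L zs Fh z0 M S \<xi> \<delta> \<sigma>
    unfolding sem_prob_def sem_def sem_prob_axioms_def
    by (intro conjI) (fact Z mu strong_mono lipschitz zs P Fh_meas xm xi_indep dsig bias var z0)+
  show ?thesis by (rule final)
qed

end
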